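(* Fix constants $n_0>0$ and $\sigma_0>0$. For $\chi_0\ge 0$ and $b\in[0,n_0]$ let $$\tilde D(b,\chi_0)=n_0\, b\left(1-\frac{b}{n_0}\right)(1+\chi_0 b),\qquad g(b)=n_0\, b\left(1-\frac{b}{n_0}\right),$$ and define $$\bar c(\chi_0)=2n_0\sqrt{\sigma_0}\,\sqrt{\max_{b\in[0,n_0]} b\left(1-\frac{b}{n_0}\right)^2(1+\chi_0 b)}.$$ For $\chi_0\ge 0$ let $A_{\chi_0}$ be the set of all $c>0$ such that the boundary value problem $$\frac{dz}{db}=-c-\frac{\tilde D(b,\chi_0)\,g(b)}{z},\qquad b\in(0,n_0),\qquad z(0^+)=z(n_0^-)=0,$$ has a non-positive solution $z=z(b)$, and let $c_*(\chi_0)=\inf A_{\chi_0}$. Then for every $\chi_0\ge 0$: (i) $\bar c(\chi_0)\ge \bar c(0)$, and (ii) $c_*(\chi_0)\ge c_*(0)$.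
   Context: These objects arise from the scalar reaction-diffusion equation $b_t=(\tilde D(b,\chi_0)b_x)_x+g(b)$ on $[0,n_0]$, where $\chi_0\ge0$ is a chemotactic sensitivity; $c\in A_{\chi_0}$ corresponds to existence of a traveling wave with speed $c$, and $c_*(\chi_0)$ is the threshold (minimal) wave speed. $z(0^+)$ and $z(n_0^-)$ denote the one-sided limits of $z$ at $0$ and $n_0$. *)

theory Defs
  imports "HOL-Analysis.Analysis"
begin

definition Dtilde :: "real \<Rightarrow> real \<Rightarrow> real \<Rightarrow> real" where
  "Dtilde n0 b chi0 = n0 * b * (1 - b / n0) * (1 + chi0 * b)"

definition gfun :: "real \<Rightarrow> real \<Rightarrow> real" where
  "gfun n0 b = n0 * b * (1 - b / n0)"

text \<open>cbar; the maximum over the compact interval is written as a supremum (it is attained).\<close>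
definition cbar :: "real \<Rightarrow> real \<Rightarrow> real \<Rightarrow> real" where
  "cbar n0 sigma0 chi0 =
     2 * n0 * sqrt sigma0 *
     sqrt (Sup ((\<lambda>b. b * (1 - b / n0)^2 * (1 + chi0 * b)) ` {0..n0}))"

text \<open>z is a non-positive solution of the boundary value problem on (0,n0);
  the ODE right-hand side must be defined, so z does not vanish in the interior.\<close>
definition is_nonpos_solution :: "real \<Rightarrow> real \<Rightarrow> real \<Rightarrow> (real \<Rightarrow> real) \<Rightarrow> bool" where
  "is_nonpos_solution n0 chi0 c z \<longleftrightarrow>
     (\<forall>b\<in>{0<..<n0}. z b \<le> 0 \<and> z b \<noteq> 0 \<and>
        (z has_real_derivative (- c - Dtilde n0 b chi0 * gfun n0 b / z b)) (at b)) \<and>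
     (z \<longlongrightarrow> 0) (at_right 0) \<and> (z \<longlongrightarrow> 0) (at_left n0)"

definition A_set :: "real \<Rightarrow> real \<Rightarrow> real set" where
  "A_set n0 chi0 = {c. c > 0 \<and> (\<exists>z. is_nonpos_solution n0 chi0 c z)}"

definition c_star :: "real \<Rightarrow> real \<Rightarrow> real" where
  "c_star n0 chi0 = Inf (A_set n0 chi0)"

end

theory Submission
  imports Defs
begin


lemma cbar_mono:
  fixes n0 sigma0 chi0 :: real
  assumes "n0 > 0" and "sigma0 > 0" and "chi0 \<ge> 0"
  shows "cbar n0 sigma0 chi0 \<ge> cbar n0 sigma0 0"
proof -
  let ?f = "\<lambda>b. b * (1 - b / n0)^2 * (1 + chi0 * b)"
  let ?g = "\<lambda>b. b * (1 - b / n0)^2 * (1 + 0 * b)"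
  have cont: "continuous_on {0..n0} ?f" using assms by (intro continuous_intros) auto
  have "compact (?f ` {0..n0})" by (rule compact_continuous_image[OF cont]) simp
  then have bdd: "bdd_above (?f ` {0..n0})" by (meson bounded_imp_bdd_above compact_imp_bounded)
  have le: "\<And>b. b \<in> {0..n0} \<Longrightarrow> ?g b \<le> ?f b"
  proof -
    fix b :: real assume "b \<in> {0..n0}"
    then have "b \<ge> 0" by simp
    then have "0 \<le> b * (1 - b / n0)^2" by simp
    moreover have "1 \<le> 1 + chi0 * b" using assms(3) \<open>b \<ge> 0\<close> by simp
    ultimately show "?g b \<le> ?f b" using mult_left_mono[of 1 "1 + chi0 * b" "b * (1 - b / n0)^2"] by simp
  qed
  have "Sup (?g ` {0..n0}) \<le> Sup (?f ` {0..n0})"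
    by (rule cSUP_mono) (use assms bdd le in \<open>force+\<close>)
  then have "sqrt (Sup (?g ` {0..n0})) \<le> sqrt (Sup (?f ` {0..n0}))" by simp
  then show ?thesis unfolding cbar_def using assms
    by (intro mult_left_mono) auto
qed


definition odef :: "real \<Rightarrow> (real \<Rightarrow> real) \<Rightarrow> real \<Rightarrow> real \<Rightarrow> real" where
  "odef c G s y = - c - G s / y"

lemma odef_mono:
  assumes "G s \<ge> 0" "y1 \<le> y2" "y2 < 0"
  shows "odef c G s y1 \<le> odef c G s y2"
proof -
  have "G s / y2 \<le> G s / y1"
    using assms by (intro divide_left_mono) (auto intro: mult_neg_neg)
  then show ?thesis unfolding odef_def by simp
qed

lemma first_zero:
  fixes h :: "real \<Rightarrow> real"
  assumes "continuous_on {x..b} h" "x \<le> b" "h x > 0" "h b \<le> 0"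
  shows "\<exists>y\<in>{x<..b}. h y = 0 \<and> (\<forall>t\<in>{x..<y}. h t > 0)"
proof -
  define S where "S = {t\<in>{x..b}. h t \<le> 0}"
  have cl: "closed S" unfolding S_def
    by (rule continuous_on_closed_Collect_le[where g="\<lambda>_. 0"]) (use assms(1) in auto)
  have ne: "S \<noteq> {}" unfolding S_def using assms by auto
  have bb: "bdd_below S" unfolding S_def by (auto intro: bdd_belowI[of _ x])
  define y where "y = Inf S"
  have yS: "y \<in> S" unfolding y_def using cl ne bb by (metis closed_contains_Inf)
  have below: "\<And>t. t \<in> S \<Longrightarrow> y \<le> t" unfolding y_def using bb by (simp add: cInf_lower)
  have yx: "x \<le> y" "y \<le> b" "h y \<le> 0" using yS unfolding S_def by auto
  have pos: "\<forall>t\<in>{x..<y}. h t > 0"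
  proof
    fix t assume "t \<in> {x..<y}"
    then have "t \<notin> S" using below by force
    then show "h t > 0" using \<open>t \<in> {x..<y}\<close> yx unfolding S_def by auto
  qed
  have "x \<noteq> y" using yx assms by auto
  have "h y = 0"
  proof (rule ccontr)
    assume "h y \<noteq> 0"
    then have "h y < 0" using yx by auto
    have "continuous_on {x..y} h" by (rule continuous_on_subset[OF assms(1)]) (use yx in auto)
    then obtain t where t: "x \<le> t" "t \<le> y" "h t = 0"
      using IVT'[of "\<lambda>t. - h t" x 0 y] \<open>h y < 0\<close> assms yx
      by (auto intro: continuous_intros)
    then have "t \<noteq> y" using \<open>h y < 0\<close> by auto
    then show False using pos t by force
  qed
  then show ?thesis using pos yx \<open>x \<noteq> y\<close> by auto
qed

definition isol :: "real \<Rightarrow> (real \<Rightarrow> real) \<Rightarrow> real \<Rightarrow> real \<Rightarrow> (real \<Rightarrow> real) \<Rightarrow> bool" where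
  "isol c G a b w \<longleftrightarrow> continuous_on {a..b} w \<and> (\<forall>s\<in>{a..b}. w s < 0) \<and>
     (\<forall>x y. a \<le> x \<longrightarrow> x \<le> y \<longrightarrow> y \<le> b \<longrightarrow>
        ((\<lambda>s. odef c G s (w s)) has_integral (w y - w x)) {x..y})"

lemma isol_sub:
  assumes "isol c G a b w" "a \<le> a'" "b' \<le> b"
  shows "isol c G a' b' w"
  using assms unfolding isol_def
  by (auto elim: continuous_on_subset)

lemma isol_compare:
  assumes w1: "isol c G a b w1" and w2: "isol c G a b w2"
    and G0: "\<forall>s\<in>{a..b}. G s \<ge> 0" and ab: "a \<le> b" and hend: "w1 b \<le> w2 b"
  shows "\<forall>x\<in>{a..b}. w1 x \<le> w2 x"
proof (rule ballI, rule ccontr)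
  fix x assume x: "x \<in> {a..b}" and "\<not> w1 x \<le> w2 x"
  define h where "h t = w1 t - w2 t" for t
  have hx: "h x > 0" using \<open>\<not> w1 x \<le> w2 x\<close> unfolding h_def by simp
  have hc: "continuous_on {x..b} h" unfolding h_def using w1 w2 x unfolding isol_def
    by (intro continuous_intros; auto elim: continuous_on_subset)
  obtain y where y: "y \<in> {x<..b}" "h y = 0" "\<forall>t\<in>{x..<y}. h t > 0"
    using first_zero[OF hc] x hx hend unfolding h_def by auto
  have i1: "((\<lambda>s. odef c G s (w1 s)) has_integral (w1 y - w1 x)) {x..y}"
    using w1 x y unfolding isol_def by auto
  have i2: "((\<lambda>s. odef c G s (w2 s)) has_integral (w2 y - w2 x)) {x..y}"
    using w2 x y unfolding isol_def by auto
  have "w2 y - w2 x \<le> w1 y - w1 x"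
  proof (rule has_integral_le[OF i2 i1])
    fix s assume s: "s \<in> {x..y}"
    have "w2 s \<le> w1 s"
    proof (cases "s = y")
      case True then show ?thesis using y(2) unfolding h_def by simp
    next
      case False then have "s \<in> {x..<y}" using s by auto
      then show ?thesis using y(3) unfolding h_def by fastforce
    qed
    moreover have "w1 s < 0" "G s \<ge> 0" using w1 G0 s x y unfolding isol_def by auto
    ultimately show "odef c G s (w2 s) \<le> odef c G s (w1 s)" by (rule odef_mono[rotated])
  qed
  then show False using y hx unfolding h_def by auto
qed



lemma ftc_weighted:
  fixes V V' :: "real \<Rightarrow> real"
  assumes "x \<le> b0" "\<forall>s\<in>{x..b0}. (V has_real_derivative V' s) (at s)"
  shows "((\<lambda>s. exp (- M * s) * (V' s - M * V s)) has_integral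
           (exp (- M * b0) * V b0 - exp (- M * x) * V x)) {x..b0}"
proof -
  have "\<And>s. s \<in> {x..b0} \<Longrightarrow> ((\<lambda>s. exp (- M * s) * V s) has_vector_derivative
           exp (- M * s) * (V' s - M * V s)) (at s within {x..b0})"
  proof -
    fix s assume s: "s \<in> {x..b0}"
    have "((\<lambda>s. exp (- M * s) * V s) has_real_derivative
           exp (- M * s) * (- M) * V s + exp (- M * s) * V' s) (at s)"
      using assms(2) s
      by (auto intro!: derivative_eq_intros)
    then have "((\<lambda>s. exp (- M * s) * V s) has_real_derivative
           exp (- M * s) * (V' s - M * V s)) (at s within {x..b0})"
      by (auto simp: algebra_simps intro: has_field_derivative_at_within)
    then show "((\<lambda>s. exp (- M * s) * V s) has_vector_derivative
           exp (- M * s) * (V' s - M * V s)) (at s within {x..b0})"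
      by (simp add: has_real_derivative_iff_has_vector_derivative)
  qed
  from fundamental_theorem_of_calculus[OF assms(1) this] show ?thesis by simp
qed

lemma exp_cancel: "exp (M * x) * (exp (- M * x) * y) = (y::real)"
  by (simp add: mult.assoc[symmetric] exp_add[symmetric])

lemma inner_exist:
  fixes c a b0 v0 :: real and G L U L' U' :: "real \<Rightarrow> real"
  assumes ab: "a < b0"
    and Gc: "continuous_on {a..b0} G" and G0: "\<forall>s\<in>{a..b0}. G s \<ge> 0"
    and LU: "\<forall>s\<in>{a..b0}. L s \<le> U s \<and> U s < 0"
    and dL: "\<forall>s\<in>{a..b0}. (L has_real_derivative L' s) (at s) \<and> odef c G s (L s) \<le> L' s"
    and dU: "\<forall>s\<in>{a..b0}. (U has_real_derivative U' s) (at s) \<and> U' s \<le> odef c G s (U s)"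
    and v0: "L b0 \<le> v0" "v0 \<le> U b0"
  shows "\<exists>w. isol c G a b0 w \<and> w b0 = v0 \<and> (\<forall>s\<in>{a..b0}. L s \<le> w s \<and> w s \<le> U s)"
proof -
  define I where "I = {a..b0}"
  have Lc: "continuous_on I L" unfolding I_def using dL
    by (intro continuous_at_imp_continuous_on) (auto intro: DERIV_isCont)
  have Uc: "continuous_on I U" unfolding I_def using dU
    by (intro continuous_at_imp_continuous_on) (auto intro: DERIV_isCont)
  have Un0: "\<forall>s\<in>I. U s \<noteq> 0" using LU unfolding I_def by auto
  have "continuous_on I (\<lambda>s. G s / (U s)^2)" using Gc Uc Un0 unfolding I_def
    by (intro continuous_intros) auto
  then have "compact ((\<lambda>s. G s / (U s)^2) ` I)" unfolding I_def
    by (intro compact_continuous_image) auto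
  then obtain B where B: "\<forall>y\<in>(\<lambda>s. G s / (U s)^2) ` I. norm y \<le> B"
    using compact_imp_bounded bounded_iff by metis
  define M where "M = max 0 B"
  have M0: "M \<ge> 0" unfolding M_def by simp
  have MB: "\<forall>s\<in>I. G s / (U s)^2 \<le> M"
  proof
    fix s assume "s \<in> I"
    then have "norm (G s / (U s)^2) \<le> B" using B by auto
    then show "G s / (U s)^2 \<le> M" unfolding M_def real_norm_def
      using abs_ge_self[of "G s / (U s)^2"] by linarith
  qed
  define F where "F s y = odef c G s y - M * y" for s y
  have Fmono: "F s y2 \<le> F s y1" if s: "s \<in> I" and h: "L s \<le> y1" "y1 \<le> y2" "y2 \<le> U s" for s y1 y2
  proof -
    have U0: "U s < 0" using LU s unfolding I_def by auto
    have y2n: "y2 < 0" using h U0 by linarith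
    have y1n: "y1 < 0" using h y2n by linarith
    have sq: "(U s)^2 \<le> y1 * y2"
      using mult_mono[of "- U s" "- y1" "- U s" "- y2"] h U0 y1n y2n
      by (simp add: power2_eq_square)
    have pos: "0 < y1 * y2 * (U s)^2" using y1n y2n U0 by (simp add: mult_neg_neg)
    have "G s / (y1 * y2) \<le> G s / (U s)^2"
      using G0 s sq pos unfolding I_def by (intro divide_left_mono) auto
    also have "\<dots> \<le> M" using MB s by auto
    finally have g1: "G s / (y1 * y2) \<le> M" .
    have eq: "F s y1 - F s y2 = (y2 - y1) * (M - G s / (y1 * y2))"
      using y1n y2n unfolding F_def odef_def by (simp add: field_simps)
    have "0 \<le> (y2 - y1) * (M - G s / (y1 * y2))" using g1 h by simp
    then show ?thesis using eq by simp
  qed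
  define g where "g w s = exp (- M * s) * F s (w s)" for w :: "real \<Rightarrow> real" and s
  define T where "T w x = exp (M * x) * (exp (- M * b0) * v0 - integral {x..b0} (g w))"
    for w :: "real \<Rightarrow> real" and x
  define S where "S = {w. continuous_on I w \<and> (\<forall>s\<in>I. L s \<le> w s \<and> w s \<le> U s)}"
  have LS: "L \<in> S" unfolding S_def using Lc LU unfolding I_def by auto
  have US: "U \<in> S" unfolding S_def using Uc LU unfolding I_def by auto
  have wneg: "w s < 0" if "w \<in> S" "s \<in> I" for w s
    using that LU unfolding S_def I_def by fastforce
  have gcont: "continuous_on I (g w)" if "w \<in> S" for w
  proof -
    have "continuous_on I w" using that unfolding S_def by auto
    then show ?thesis unfolding g_def F_def odef_def using Gc wneg[OF that] unfolding I_def
      by (intro continuous_intros) (auto, metis less_irrefl)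
  qed
  have Fcont: "continuous_on I (\<lambda>s. F s (w s))" if "w \<in> S" for w
  proof -
    have "continuous_on I w" using that unfolding S_def by auto
    then show ?thesis unfolding F_def odef_def using Gc wneg[OF that] unfolding I_def
      by (intro continuous_intros) (auto, metis less_irrefl)
  qed
  have gint: "g w integrable_on {x..b0}" if "w \<in> S" "x \<in> I" for w x
    using gcont[OF that(1)] that(2) unfolding I_def
    by (intro integrable_continuous_real) (auto elim: continuous_on_subset)
  have Tcont: "continuous_on I (T w)" if "w \<in> S" for w
  proof -
    have "continuous_on {a..b0} (\<lambda>x. integral {x..b0} (g w))"
      by (rule indefinite_integral_continuous_1') (use gint[OF that, of a] ab in \<open>auto simp: I_def\<close>)
    then show ?thesis unfolding T_def I_def by (intro continuous_intros)
  qed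
  have Tmono: "T w1 x \<le> T w2 x" if "w1 \<in> S" "w2 \<in> S" "\<forall>s\<in>I. w1 s \<le> w2 s" "x \<in> I" for w1 w2 x
  proof -
    have "integral {x..b0} (g w2) \<le> integral {x..b0} (g w1)"
    proof (rule integral_le[OF gint[OF that(2,4)] gint[OF that(1,4)]])
      fix s assume s: "s \<in> {x..b0}"
      then have sI: "s \<in> I" using that(4) unfolding I_def by auto
      have "F s (w2 s) \<le> F s (w1 s)"
        using Fmono[OF sI] that(1,2,3) sI unfolding S_def by auto
      then show "g w2 s \<le> g w1 s" unfolding g_def by simp
    qed
    then show ?thesis unfolding T_def by (intro mult_left_mono) auto
  qed
  have TU: "T U x \<le> U x" if x: "x \<in> I" for x
  proof -
    have xb: "x \<le> b0" using x unfolding I_def by auto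
    have i1: "((\<lambda>s. exp (- M * s) * (U' s - M * U s)) has_integral
           (exp (- M * b0) * U b0 - exp (- M * x) * U x)) {x..b0}"
      using ftc_weighted[OF xb, of U U'] dU x unfolding I_def by auto
    have "exp (- M * b0) * U b0 - exp (- M * x) * U x \<le> integral {x..b0} (g U)"
    proof (rule has_integral_le[OF i1 integrable_integral[OF gint[OF US x]]])
      fix s assume "s \<in> {x..b0}"
      then have "U' s \<le> odef c G s (U s)" using dU x unfolding I_def by auto
      then show "exp (- M * s) * (U' s - M * U s) \<le> g U s"
        unfolding g_def F_def by (intro mult_left_mono) auto
    qed
    moreover have "exp (- M * b0) * v0 \<le> exp (- M * b0) * U b0" using v0 by simp
    ultimately have "exp (- M * b0) * v0 - integral {x..b0} (g U) \<le> exp (- M * x) * U x" by linarith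
    then have "T U x \<le> exp (M * x) * (exp (- M * x) * U x)" unfolding T_def
      by (intro mult_left_mono) auto
    then show ?thesis by (simp only: exp_cancel)
  qed
  have TL: "L x \<le> T L x" if x: "x \<in> I" for x
  proof -
    have xb: "x \<le> b0" using x unfolding I_def by auto
    have i1: "((\<lambda>s. exp (- M * s) * (L' s - M * L s)) has_integral
           (exp (- M * b0) * L b0 - exp (- M * x) * L x)) {x..b0}"
      using ftc_weighted[OF xb, of L L'] dL x unfolding I_def by auto
    have "integral {x..b0} (g L) \<le> exp (- M * b0) * L b0 - exp (- M * x) * L x"
    proof (rule has_integral_le[OF integrable_integral[OF gint[OF LS x]] i1])
      fix s assume "s \<in> {x..b0}"
      then have "odef c G s (L s) \<le> L' s" using dL x unfolding I_def by auto
      then show "g L s \<le> exp (- M * s) * (L' s - M * L s)"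
        unfolding g_def F_def by (intro mult_left_mono) auto
    qed
    moreover have "exp (- M * b0) * L b0 \<le> exp (- M * b0) * v0" using v0 by simp
    ultimately have "exp (- M * x) * L x \<le> exp (- M * b0) * v0 - integral {x..b0} (g L)" by linarith
    then have "exp (M * x) * (exp (- M * x) * L x) \<le> T L x" unfolding T_def
      by (intro mult_left_mono) auto
    then show ?thesis by (simp only: exp_cancel)
  qed
  have TS: "T w \<in> S" if w: "w \<in> S" for w
  proof -
    have "T w x \<le> U x" if x: "x \<in> I" for x
      using Tmono[OF w US _ x] TU[OF x] w unfolding S_def by force
    moreover have "L x \<le> T w x" if x: "x \<in> I" for x
      using Tmono[OF LS w _ x] TL[OF x] w unfolding S_def by force
    ultimately show ?thesis unfolding S_def using Tcont[OF w] by auto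
  qed
  define q where "q k = (T ^^ k) U" for k
  have qS: "q k \<in> S" for k
    by (induction k) (auto simp: q_def US TS)
  have qSuc: "q (Suc k) = T (q k)" for k by (simp add: q_def)
  have qdec: "\<forall>s\<in>I. q (Suc k) s \<le> q k s" for k
  proof (induction k)
    case 0 then show ?case using TU by (simp add: q_def)
  next
    case (Suc k)
    show ?case using Tmono[OF qS qS Suc] by (simp add: qSuc)
  qed
  define W where "W s = (INF k. q k s)" for s
  have bddq: "bdd_below (range (\<lambda>k. q k s))" if "s \<in> I" for s
    using qS that unfolding S_def by (auto intro!: bdd_belowI[of _ "L s"])
  have qconv: "(\<lambda>k. q k s) \<longlonglongrightarrow> W s" if s: "s \<in> I" for s
    unfolding W_def
    by (rule LIMSEQ_decseq_INF[OF bddq[OF s]]) (use qdec s in \<open>auto simp: decseq_Suc_iff\<close>)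
  have WL: "L s \<le> W s" if s: "s \<in> I" for s
    unfolding W_def using qS s unfolding S_def by (auto intro!: cINF_greatest)
  have WU: "W s \<le> U s" if s: "s \<in> I" for s
  proof -
    have "W s \<le> q 0 s" unfolding W_def using bddq[OF s] by (rule cINF_lower) simp
    then show ?thesis by (simp add: q_def)
  qed
  have Wneg: "W s < 0" if "s \<in> I" for s using WU[OF that] LU that unfolding I_def by force
  define hb where "hb s = exp (- M * s) * (\<bar>F s (L s)\<bar> + \<bar>F s (U s)\<bar>)" for s
  have hbcont: "continuous_on I hb"
  proof -
    have "continuous_on I (\<lambda>s. F s (L s))" "continuous_on I (\<lambda>s. F s (U s))"
      using Fcont[OF LS] Fcont[OF US] by auto
    then show ?thesis unfolding hb_def by (intro continuous_intros)
  qed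
  have DCT: "g W integrable_on {x..b0} \<and> (\<lambda>k. integral {x..b0} (g (q k))) \<longlonglongrightarrow> integral {x..b0} (g W)"
    if x: "x \<in> I" for x
  proof -
    have sub: "{x..b0} \<subseteq> I" using x unfolding I_def by auto
    have hint: "hb integrable_on {x..b0}"
      by (rule integrable_continuous_real) (rule continuous_on_subset[OF hbcont sub])
    have le: "norm (g (q k) s) \<le> hb s" if s: "s \<in> {x..b0}" for k s
    proof -
      have sI: "s \<in> I" using s sub by auto
      have b1: "L s \<le> q k s" "q k s \<le> U s" using qS[of k] sI unfolding S_def by auto
      have "F s (U s) \<le> F s (q k s)" "F s (q k s) \<le> F s (L s)"
        using Fmono[OF sI] b1 LU sI unfolding I_def by auto
      then have "\<bar>F s (q k s)\<bar> \<le> \<bar>F s (L s)\<bar> + \<bar>F s (U s)\<bar>" by linarith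
      then show ?thesis unfolding g_def hb_def by (simp add: abs_mult)
    qed
    have conv: "(\<lambda>k. g (q k) s) \<longlonglongrightarrow> g W s" if s: "s \<in> {x..b0}" for s
    proof -
      have sI: "s \<in> I" using s sub by auto
      show ?thesis unfolding g_def F_def odef_def using qconv[OF sI] Wneg[OF sI]
        by (intro tendsto_intros) auto
    qed
    show ?thesis
      using dominated_convergence[OF gint[OF qS x] hint le conv] by auto
  qed
  have WT: "W x = T W x" if x: "x \<in> I" for x
  proof -
    have "(\<lambda>k. T (q k) x) \<longlonglongrightarrow> T W x" unfolding T_def
      using DCT[OF x] by (intro tendsto_intros) auto
    then have "(\<lambda>k. q (Suc k) x) \<longlonglongrightarrow> T W x" by (simp add: qSuc)
    moreover have "(\<lambda>k. q (Suc k) x) \<longlonglongrightarrow> W x" using qconv[OF x] by (rule LIMSEQ_Suc)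
    ultimately show ?thesis using LIMSEQ_unique by blast
  qed
  have aI: "a \<in> I" using ab unfolding I_def by auto
  have gWint: "g W integrable_on {a..b0}" using DCT[OF aI] by auto
  have Wc: "continuous_on I W"
  proof -
    have "continuous_on {a..b0} (\<lambda>x. integral {x..b0} (g W))"
      by (rule indefinite_integral_continuous_1'[OF gWint])
    then have "continuous_on I (T W)" unfolding T_def I_def by (intro continuous_intros)
    then show ?thesis by (rule continuous_on_eq) (simp add: WT)
  qed
  have WS: "W \<in> S" unfolding S_def using Wc WL WU by auto
  have gWc: "continuous_on {a..b0} (g W)" using gcont[OF WS] unfolding I_def .
  define K where "K = exp (- M * b0) * v0 - integral {a..b0} (g W)"
  have Wrep: "W x = exp (M * x) * (K + integral {a..x} (g W))" if x: "x \<in> I" for x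
  proof -
    have "integral {a..x} (g W) + integral {x..b0} (g W) = integral {a..b0} (g W)"
      using x gWint unfolding I_def by (intro Henstock_Kurzweil_Integration.integral_combine) auto
    then have e: "integral {a..b0} (g W) = integral {a..x} (g W) + integral {x..b0} (g W)" by simp
    show ?thesis using WT[OF x] unfolding T_def K_def e by (simp add: algebra_simps)
  qed
  have Wder: "(W has_real_derivative odef c G x (W x)) (at x within I)" if x: "x \<in> I" for x
  proof -
    have d1: "((\<lambda>y. integral {a..y} (g W)) has_real_derivative g W x) (at x within {a..b0})"
      using integral_has_vector_derivative[OF gWc, of x] x unfolding I_def
      by (simp add: has_real_derivative_iff_has_vector_derivative)
    have "((\<lambda>y. exp (M * y) * (K + integral {a..y} (g W))) has_real_derivative
           exp (M * x) * M * (K + integral {a..x} (g W)) + exp (M * x) * g W x) (at x within I)"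
      unfolding I_def by (auto intro!: derivative_eq_intros d1)
    moreover have "exp (M * x) * M * (K + integral {a..x} (g W)) + exp (M * x) * g W x
        = odef c G x (W x)"
    proof -
      have "exp (M * x) * g W x = F x (W x)" unfolding g_def by (simp only: exp_cancel)
      then show ?thesis using Wrep[OF x] unfolding F_def by (simp add: algebra_simps)
    qed
    ultimately have "((\<lambda>y. exp (M * y) * (K + integral {a..y} (g W))) has_real_derivative
           odef c G x (W x)) (at x within I)" by simp
    then show ?thesis
      by (rule has_field_derivative_transform_within[of _ _ _ _ 1]) (use x Wrep in auto)
  qed
  have "isol c G a b0 W"
    unfolding isol_def
  proof (intro conjI allI impI)
    show "continuous_on {a..b0} W" using Wc unfolding I_def .
    show "\<forall>s\<in>{a..b0}. W s < 0" using Wneg unfolding I_def by auto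
    fix x y assume xy: "a \<le> x" "x \<le> y" "y \<le> b0"
    show "((\<lambda>s. odef c G s (W s)) has_integral W y - W x) {x..y}"
    proof (rule fundamental_theorem_of_calculus[OF xy(2)])
      fix s assume s: "s \<in> {x..y}"
      then have sI: "s \<in> I" using xy unfolding I_def by auto
      have "(W has_real_derivative odef c G s (W s)) (at s within {x..y})"
        by (rule DERIV_subset[OF Wder[OF sI]]) (use xy in \<open>auto simp: I_def\<close>)
      then show "(W has_vector_derivative odef c G s (W s)) (at s within {x..y})"
        by (simp add: has_real_derivative_iff_has_vector_derivative)
    qed
  qed
  moreover have "W b0 = v0"
  proof -
    have "b0 \<in> I" using ab unfolding I_def by auto
    then have "W b0 = exp (M * b0) * (exp (- M * b0) * v0 - integral {b0..b0} (g W))"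
      using WT unfolding T_def by blast
    moreover have "integral {b0..b0} (g W) = 0" by simp
    ultimately show ?thesis by (simp only: diff_zero exp_cancel)
  qed
  ultimately show ?thesis using WL WU unfolding I_def by blast
qed


lemma outer_exist:
  fixes c n0 :: real and G L U L' U' :: "real \<Rightarrow> real"
  assumes n0: "n0 > 0"
    and Gc: "continuous_on {0<..<n0} G" and G0: "\<forall>s\<in>{0<..<n0}. G s \<ge> 0"
    and LU: "\<forall>s\<in>{0<..<n0}. L s \<le> U s \<and> U s < 0"
    and dL: "\<forall>s\<in>{0<..<n0}. (L has_real_derivative L' s) (at s) \<and> odef c G s (L s) \<le> L' s"
    and dU: "\<forall>s\<in>{0<..<n0}. (U has_real_derivative U' s) (at s) \<and> U' s \<le> odef c G s (U s)"
    and L0: "(L \<longlongrightarrow> 0) (at_right 0)" and Ln: "(L \<longlongrightarrow> 0) (at_left n0)"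
  shows "\<exists>W. (\<forall>s\<in>{0<..<n0}. W s < 0 \<and> (W has_real_derivative odef c G s (W s)) (at s)) \<and>
             (W \<longlongrightarrow> 0) (at_right 0) \<and> (W \<longlongrightarrow> 0) (at_left n0)"
proof -
  define a where "a n = n0 / (real n + 3)" for n :: nat
  define b where "b n = n0 - a n" for n
  have a_pos: "0 < a n" for n using n0 by (simp add: a_def)
  have a_lt: "a n < n0 / 2" for n using n0 by (simp add: a_def field_simps add_pos_nonneg)
  have ab: "a n < b n" for n using a_lt[of n] unfolding b_def by linarith
  have bn: "b n < n0" for n using a_pos[of n] unfolding b_def by linarith
  have a_mono: "a m \<le> a n" if "n \<le> m" for n m
    unfolding a_def using n0 that by (intro divide_left_mono) auto
  have b_mono: "b n \<le> b m" if "n \<le> m" for n m using a_mono[OF that] unfolding b_def by linarith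
  have sub: "{a n..b n} \<subseteq> {0<..<n0}" for n using a_pos[of n] bn[of n] by auto
  have cover: "\<exists>N. \<forall>m\<ge>N. {x..y} \<subseteq> {a m..b m}" if "0 < x" "y < n0" for x y
  proof -
    obtain N :: nat where N: "n0 / min x (n0 - y) < real N" using reals_Archimedean2 by blast
    have mpos: "0 < min x (n0 - y)" using that by auto
    have "a N < min x (n0 - y)"
    proof -
      have "n0 < real N * min x (n0 - y)" using N mpos by (simp add: field_simps)
      also have "\<dots> \<le> (real N + 3) * min x (n0 - y)" using mpos by (intro mult_right_mono) auto
      finally have h: "n0 < min x (n0 - y) * (real N + 3)" by (simp add: mult.commute)
      have p3: "0 < real N + 3" by simp
      show ?thesis unfolding a_def using h pos_divide_less_eq[OF p3, of n0 "min x (n0 - y)"] by blast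
    qed
    then have "\<forall>m\<ge>N. a m \<le> x \<and> y \<le> b m"
      using a_mono unfolding b_def by (metis min.bounded_iff order.trans diff_le_eq add.commute order_less_imp_le le_diff_eq)
    then show ?thesis by auto
  qed
  have "\<forall>n. \<exists>w. isol c G (a n) (b n) w \<and> w (b n) = U (b n) \<and> (\<forall>s\<in>{a n..b n}. L s \<le> w s \<and> w s \<le> U s)"
  proof
    fix n
    show "\<exists>w. isol c G (a n) (b n) w \<and> w (b n) = U (b n) \<and> (\<forall>s\<in>{a n..b n}. L s \<le> w s \<and> w s \<le> U s)"
      by (rule inner_exist[OF ab]) (use sub[of n] Gc G0 LU dL dU ab[of n] a_pos[of n] bn[of n] in \<open>auto elim: continuous_on_subset\<close>)
  qed
  then obtain w where w: "\<And>n. isol c G (a n) (b n) (w n)" "\<And>n. w n (b n) = U (b n)"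
      "\<And>n s. s \<in> {a n..b n} \<Longrightarrow> L s \<le> w n s \<and> w n s \<le> U s"
    by metis
  have ord: "w m s \<le> w n s" if "n \<le> m" "s \<in> {a n..b n}" for n m s
  proof -
    have i: "isol c G (a n) (b n) (w m)"
      using isol_sub[OF w(1)[of m] a_mono[OF that(1)] b_mono[OF that(1)]] .
    have "w m (b n) \<le> w n (b n)"
      using w(3)[of "b n" m] w(2)[of n] a_mono[OF that(1)] b_mono[OF that(1)] ab[of n] by auto
    moreover have "\<forall>s\<in>{a n..b n}. 0 \<le> G s" using G0 sub[of n] by blast
    ultimately show ?thesis using isol_compare[OF i w(1)[of n]] ab[of n] that(2) by auto
  qed
  have Wconv0: "convergent (\<lambda>k. w k s)" if s: "s \<in> {0<..<n0}" for s
  proof -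
    obtain N where N: "\<forall>m\<ge>N. {s..s} \<subseteq> {a m..b m}" using cover[of s s] s by auto
    have "(\<lambda>k. w (k + N) s) \<longlonglongrightarrow> (INF k. w (k + N) s)"
    proof (rule LIMSEQ_decseq_INF)
      show "bdd_below (range (\<lambda>k. w (k + N) s))"
        using w(3) N by (intro bdd_belowI[of _ "L s"]) force
      show "decseq (\<lambda>k. w (k + N) s)"
        unfolding decseq_def using ord N by auto
    qed
    then show ?thesis using LIMSEQ_offset convergent_def by blast
  qed
  define W where "W s = lim (\<lambda>k. w k s)" for s
  have Wconv: "(\<lambda>k. w k s) \<longlonglongrightarrow> W s" if "s \<in> {0<..<n0}" for s
    using Wconv0[OF that] unfolding W_def by (simp add: convergent_LIMSEQ_iff)
  have WLU: "L s \<le> W s \<and> W s \<le> U s" if s: "s \<in> {0<..<n0}" for s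
  proof -
    obtain N where N: "\<forall>m\<ge>N. {s..s} \<subseteq> {a m..b m}" using cover[of s s] s by auto
    have ev: "eventually (\<lambda>k. L s \<le> w k s \<and> w k s \<le> U s) sequentially"
      using N w(3) by (intro eventually_sequentiallyI[of N]) auto
    have "L s \<le> W s" by (rule tendsto_lowerbound[OF Wconv[OF s]]) (use ev in \<open>auto elim: eventually_mono\<close>)
    moreover have "W s \<le> U s" by (rule tendsto_upperbound[OF Wconv[OF s]]) (use ev in \<open>auto elim: eventually_mono\<close>)
    ultimately show ?thesis by auto
  qed
  have Wneg: "W s < 0" if "s \<in> {0<..<n0}" for s using WLU[OF that] LU that by force
  have Wint: "((\<lambda>s. odef c G s (W s)) has_integral (W y - W x)) {x..y}"
    if xy: "0 < x" "x \<le> y" "y < n0" for x y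
  proof -
    obtain N where N: "\<forall>m\<ge>N. {x..y} \<subseteq> {a m..b m}" using cover[of x y] xy by auto
    have subxy: "{x..y} \<subseteq> {0<..<n0}" using xy by auto
    define f where "f k s = odef c G s (w (k + N) s)" for k s
    define h where "h s = \<bar>c\<bar> + G s / (- U s)" for s
    have fi: "(f k has_integral (w (k + N) y - w (k + N) x)) {x..y}" for k
    proof -
      have "{x..y} \<subseteq> {a (k+N)..b (k+N)}" using N by auto
      then show ?thesis using w(1)[of "k+N"] xy unfolding isol_def f_def by auto
    qed
    have Uc: "continuous_on {x..y} U" using dU subxy
      by (intro continuous_at_imp_continuous_on) (auto intro: DERIV_isCont)
    have hint: "h integrable_on {x..y}"
      unfolding h_def using Uc Gc subxy LU
      by (intro integrable_continuous_real continuous_intros)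
         (auto elim: continuous_on_subset, force)
    have le: "norm (f k s) \<le> h s" if s: "s \<in> {x..y}" for k s
    proof -
      have sI: "s \<in> {0<..<n0}" using s subxy by auto
      have "s \<in> {a (k+N)..b (k+N)}" using N s by (meson le_add2 subsetD)
      then have b1: "w (k + N) s \<le> U s" using w(3) by blast
      have U0: "U s < 0" using LU sI by auto
      have G0s: "G s \<ge> 0" using G0 sI by auto
      have "G s / (- w (k + N) s) \<le> G s / (- U s)"
        using b1 U0 G0s by (intro divide_left_mono) (auto intro!: mult_neg_neg)
      moreover have "G s / (- w (k + N) s) \<ge> 0" using b1 U0 G0s by (intro divide_nonneg_pos) auto
      ultimately show ?thesis unfolding f_def h_def odef_def by (simp add: abs_if)
    qed
    have cv: "(\<lambda>k. f k s) \<longlonglongrightarrow> odef c G s (W s)" if s: "s \<in> {x..y}" for s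
    proof -
      have sI: "s \<in> {0<..<n0}" using s subxy by auto
      have "(\<lambda>k. w (k + N) s) \<longlonglongrightarrow> W s" using Wconv[OF sI] by (rule LIMSEQ_ignore_initial_segment)
      then show ?thesis unfolding f_def odef_def using Wneg[OF sI] by (intro tendsto_intros) auto
    qed
    have fint: "f k integrable_on {x..y}" for k using fi by blast
    note D = dominated_convergence[OF fint hint le cv]
    have "(\<lambda>k. integral {x..y} (f k)) \<longlonglongrightarrow> W y - W x"
    proof -
      have "(\<lambda>k. w (k + N) y - w (k + N) x) \<longlonglongrightarrow> W y - W x"
        using LIMSEQ_ignore_initial_segment[OF Wconv[of x], of N] LIMSEQ_ignore_initial_segment[OF Wconv[of y], of N] xy
        by (intro tendsto_intros) auto
      moreover have "(\<lambda>k. integral {x..y} (f k)) = (\<lambda>k. w (k + N) y - w (k + N) x)"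
        using fi integral_unique by blast
      ultimately show ?thesis by simp
    qed
    then have "integral {x..y} (\<lambda>s. odef c G s (W s)) = W y - W x" using D(2) LIMSEQ_unique by blast
    then show ?thesis using D(1) by (metis has_integral_integral)
  qed
  have Wder: "(W has_real_derivative odef c G s (W s)) (at s)" if s: "s \<in> {0<..<n0}" for s
  proof -
    define p where "p = s / 2"
    define q where "q = (s + n0) / 2"
    have pq: "0 < p" "p < s" "s < q" "q < n0" using s unfolding p_def q_def by auto
    have subpq: "{p..q} \<subseteq> {0<..<n0}" using pq by auto
    have gint: "(\<lambda>t. odef c G t (W t)) integrable_on {p..q}" using Wint[of p q] pq by auto
    have Wrep: "W y = W p + integral {p..y} (\<lambda>t. odef c G t (W t))" if "y \<in> {p..q}" for y
      using Wint[of p y] that pq by (simp add: integral_unique)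
    have Wc: "continuous_on {p..q} W"
    proof -
      have "continuous_on {p..q} (\<lambda>y. W p + integral {p..y} (\<lambda>t. odef c G t (W t)))"
        by (intro continuous_intros indefinite_integral_continuous_1 gint)
      then show ?thesis by (rule continuous_on_eq) (metis Wrep)
    qed
    have Gpq: "continuous_on {p..q} G" by (rule continuous_on_subset[OF Gc subpq])
    have Wnz: "\<forall>t\<in>{p..q}. W t \<noteq> 0" using Wneg subpq by (metis less_irrefl subsetD)
    have gc: "continuous_on {p..q} (\<lambda>t. odef c G t (W t))"
      unfolding odef_def by (intro continuous_intros Gpq Wc) (use Wnz in blast)
    have "((\<lambda>y. integral {p..y} (\<lambda>t. odef c G t (W t))) has_vector_derivative odef c G s (W s))
           (at s within {p..q})"
      by (rule integral_has_vector_derivative[OF gc]) (use pq in auto)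
    moreover have "at s within {p..q} = at s"
      by (rule at_within_interior) (use pq in auto)
    ultimately have d1: "((\<lambda>y. integral {p..y} (\<lambda>t. odef c G t (W t))) has_real_derivative odef c G s (W s)) (at s)"
      by (simp add: has_real_derivative_iff_has_vector_derivative)
    have "((\<lambda>y. W p + integral {p..y} (\<lambda>t. odef c G t (W t))) has_real_derivative 0 + odef c G s (W s)) (at s)"
      by (rule DERIV_add[OF DERIV_const d1])
    then have d2: "((\<lambda>y. W p + integral {p..y} (\<lambda>t. odef c G t (W t))) has_real_derivative odef c G s (W s)) (at s)"
      by simp
    have eqW: "\<And>y. y \<in> {p<..<q} \<Longrightarrow> W p + integral {p..y} (\<lambda>t. odef c G t (W t)) = W y"
    proof -
      fix y assume "y \<in> {p<..<q}"
      then have "y \<in> {p..q}" by auto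
      from Wrep[OF this] show "W p + integral {p..y} (\<lambda>t. odef c G t (W t)) = W y" by (rule sym)
    qed
    show ?thesis
      by (rule has_field_derivative_transform_within_open[OF d2 open_greaterThanLessThan _ eqW]) (use pq in auto)
  qed
  have lim0: "(W \<longlongrightarrow> 0) (at_right 0)"
  proof (rule tendsto_sandwich[OF _ _ L0 tendsto_const])
    show "eventually (\<lambda>s. L s \<le> W s) (at_right 0)"
      using eventually_at_right_real[OF n0] by eventually_elim (use WLU in auto)
    show "eventually (\<lambda>s. W s \<le> 0) (at_right 0)"
      using eventually_at_right_real[OF n0] by eventually_elim (use Wneg in \<open>auto intro: less_imp_le\<close>)
  qed
  have limn: "(W \<longlongrightarrow> 0) (at_left n0)"
  proof (rule tendsto_sandwich[OF _ _ Ln tendsto_const])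
    show "eventually (\<lambda>s. L s \<le> W s) (at_left n0)"
      using eventually_at_left_real[OF n0] by eventually_elim (use WLU in auto)
    show "eventually (\<lambda>s. W s \<le> 0) (at_left n0)"
      using eventually_at_left_real[OF n0] by eventually_elim (use Wneg in \<open>auto intro: less_imp_le\<close>)
  qed
  show ?thesis using Wneg Wder lim0 limn by blast
qed



lemma Gform: "Dtilde n0 s chi * gfun n0 s = n0^2 * (s * (1 - s / n0))^2 * (1 + chi * s)"
  unfolding Dtilde_def gfun_def by (simp add: power2_eq_square algebra_simps)

lemma u_facts:
  fixes n0 s :: real
  assumes "0 < s" "s < n0"
  shows "0 < s * (1 - s / n0)" "s * (1 - s / n0) \<le> n0" "\<bar>1 - 2 * s / n0\<bar> \<le> 1"
proof -
  have n0: "n0 > 0" using assms by auto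
  have q: "0 < s / n0" "s / n0 < 1" using assms n0 by (auto simp: field_simps)
  show "0 < s * (1 - s / n0)" using q assms by auto
  have "s * (1 - s / n0) \<le> s" using mult_left_mono[of "1 - s/n0" 1 s] q assms by simp
  then show "s * (1 - s / n0) \<le> n0" using assms by linarith
  have "2 * s / n0 = 2 * (s / n0)" by simp
  then show "\<bar>1 - 2 * s / n0\<bar> \<le> 1" unfolding abs_le_iff using q by linarith
qed

lemma barrier_below:
  fixes c n0 :: real and G0 G1 z U U' :: "real \<Rightarrow> real"
  assumes n0: "n0 > 0"
    and GG: "\<forall>s\<in>{0<..<n0}. 0 \<le> G0 s \<and> G0 s \<le> G1 s"
    and z: "\<forall>s\<in>{0<..<n0}. z s < 0 \<and> (z has_real_derivative odef c G1 s (z s)) (at s)"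
    and zl: "(z \<longlongrightarrow> 0) (at_left n0)"
    and U: "\<forall>s\<in>{0<..<n0}. U s < 0 \<and> (U has_real_derivative U' s) (at s) \<and> U' s \<le> odef c G0 s (U s)"
    and Ul: "(U \<longlongrightarrow> 0) (at_left n0)"
  shows "\<forall>s\<in>{0<..<n0}. z s \<le> U s"
proof (rule ballI, rule ccontr)
  fix b assume b: "b \<in> {0<..<n0}" and nb: "\<not> z b \<le> U b"
  define h where "h t = z t - U t" for t
  have hb: "h b > 0" using nb unfolding h_def by simp
  have hder: "(h has_real_derivative (odef c G1 t (z t) - U' t)) (at t)" if "t \<in> {0<..<n0}" for t
    unfolding h_def using z U that by (auto intro!: derivative_eq_intros)
  have hpos: "odef c G1 t (z t) - U' t \<ge> 0" if t: "t \<in> {0<..<n0}" "h t > 0" for t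
  proof -
    have zt: "z t < 0" "U t < z t" using z t unfolding h_def by auto
    have "G1 t / z t \<le> G0 t / z t" using GG t zt by (intro divide_right_mono_neg) auto
    then have "odef c G0 t (z t) \<le> odef c G1 t (z t)" unfolding odef_def by simp
    moreover have "odef c G0 t (U t) \<le> odef c G0 t (z t)"
      using GG t zt by (intro odef_mono) auto
    moreover have "U' t \<le> odef c G0 t (U t)" using U t by auto
    ultimately show ?thesis by linarith
  qed
  have hcont: "continuous_on {b..t} h" if "t < n0" for t
  proof (intro continuous_at_imp_continuous_on ballI)
    fix x assume "x \<in> {b..t}"
    then have "x \<in> {0<..<n0}" using b that by auto
    then show "isCont h x" by (rule DERIV_isCont[OF hder])
  qed
  have big: "h t > h b / 2" if t: "t \<in> {b..<n0}" for t
  proof (rule ccontr)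
    assume "\<not> h t > h b / 2"
    then have kt: "h t - h b / 2 \<le> 0" by simp
    have kc: "continuous_on {b..t} (\<lambda>x. h x - h b / 2)" using hcont[of t] t by (intro continuous_intros) auto
    obtain y where y: "y \<in> {b<..t}" "h y - h b / 2 = 0" "\<forall>x\<in>{b..<y}. h x - h b / 2 > 0"
      using first_zero[OF kc] t hb kt by auto
    have "h b \<le> h y"
    proof (rule DERIV_nonneg_imp_nondecreasing[of b y h])
      show "b \<le> y" using y by auto
      fix x assume x: "b \<le> x" "x \<le> y"
      have xI: "x \<in> {0<..<n0}" using x y b t by auto
      have "h x > 0"
      proof (cases "x = y")
        case True then show ?thesis using y hb by simp
      next
        case False then show ?thesis using y x hb by force
      qed
      then show "\<exists>d. (h has_real_derivative d) (at x) \<and> d \<ge> 0" using hder[OF xI] hpos[OF xI] by blast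
    qed
    then show False using y hb by simp
  qed
  have "(h \<longlongrightarrow> 0 - 0) (at_left n0)" unfolding h_def using zl Ul by (intro tendsto_intros)
  moreover have "eventually (\<lambda>t. h b / 2 \<le> h t) (at_left n0)"
  proof -
    have "n0 > b" using b by auto
    from eventually_at_left_real[OF this] show ?thesis
      by eventually_elim (use big in \<open>auto intro: less_imp_le\<close>)
  qed
  ultimately have "h b / 2 \<le> 0 - 0" by (rule tendsto_lowerbound) simp
  then show False using hb by simp
qed



lemma u_deriv: "n0 \<noteq> 0 \<Longrightarrow> ((\<lambda>s. s * (1 - s / n0)) has_real_derivative (1 - 2 * s / n0)) (at s)"
  by (auto intro!: derivative_eq_intros simp: field_simps)

lemma U_sub:
  fixes n0 c chi m s :: real
  assumes n0: "n0 > 0" and c: "c > 0" and chi: "chi \<ge> 0"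
    and m_def: "m = min (1 / n0) (n0^2 / (2 + c))" and s: "0 < s" "s < n0"
  shows "((\<lambda>s. - m * (s * (1 - s / n0))^2) has_real_derivative
            (- 2 * m * (s * (1 - s / n0)) * (1 - 2 * s / n0))) (at s)"
    and "- 2 * m * (s * (1 - s / n0)) * (1 - 2 * s / n0)
           \<le> odef c (\<lambda>s. Dtilde n0 s chi * gfun n0 s) s (- m * (s * (1 - s / n0))^2)"
    and "- m * (s * (1 - s / n0))^2 < 0"
    and "- (s * (1 - s / n0)) \<le> - m * (s * (1 - s / n0))^2"
proof -
  define u where "u = s * (1 - s / n0)"
  have uf: "0 < u" "u \<le> n0" "\<bar>1 - 2 * s / n0\<bar> \<le> 1" using u_facts[OF s] unfolding u_def by auto
  have m1: "m \<le> 1 / n0" "m \<le> n0^2 / (2 + c)" unfolding m_def by auto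
  have mpos: "m > 0" unfolding m_def using n0 c by auto
  show "((\<lambda>s. - m * (s * (1 - s / n0))^2) has_real_derivative
            (- 2 * m * (s * (1 - s / n0)) * (1 - 2 * s / n0))) (at s)"
  proof -
    have "((\<lambda>s. - m * (s * (1 - s / n0))^2) has_real_derivative
            (- m) * (of_nat 2 * ((1 - 2 * s / n0) * (s * (1 - s / n0)) ^ (2 - Suc 0)))) (at s)"
      by (intro DERIV_cmult DERIV_power u_deriv) (use n0 in auto)
    then show ?thesis by (rule DERIV_cong) simp
  qed
  have "- 2 * m * u * (1 - 2 * s / n0) \<le> 2 * m * u * \<bar>1 - 2 * s / n0\<bar>"
  proof -
    have "- (1 - 2 * s / n0) \<le> \<bar>1 - 2 * s / n0\<bar>" by simp
    then have "2 * m * u * (- (1 - 2 * s / n0)) \<le> 2 * m * u * \<bar>1 - 2 * s / n0\<bar>"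
      using mpos uf by (intro mult_left_mono) auto
    then show ?thesis by (simp add: algebra_simps)
  qed
  also have "\<dots> \<le> 2 * m * u * 1" using mpos uf by (intro mult_left_mono) auto
  also have "\<dots> \<le> 2 * m * n0" using mpos uf by simp
  also have "\<dots> \<le> 2 * (1 / n0) * n0" using m1 n0 by (intro mult_right_mono mult_left_mono) auto
  also have "\<dots> = 2" using n0 by simp
  finally have lhs: "- 2 * m * u * (1 - 2 * s / n0) \<le> 2" .
  have "(2 + c) * m \<le> n0^2" using m1(2) c by (simp add: field_simps)
  then have "2 + c \<le> n0^2 / m" using mpos by (simp add: field_simps)
  also have "n0^2 / m \<le> n0^2 * (1 + chi * s) / m"
    using mpos chi s by (intro divide_right_mono) (auto intro!: mult_left_le)
  finally have rhs: "2 + c \<le> n0^2 * (1 + chi * s) / m" .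
  have oeq: "odef c (\<lambda>s. Dtilde n0 s chi * gfun n0 s) s (- m * u^2) = - c + n0^2 * (1 + chi * s) / m"
    unfolding odef_def Gform u_def[symmetric] using uf mpos by (simp add: field_simps)
  show "- 2 * m * (s * (1 - s / n0)) * (1 - 2 * s / n0)
           \<le> odef c (\<lambda>s. Dtilde n0 s chi * gfun n0 s) s (- m * (s * (1 - s / n0))^2)"
    unfolding u_def[symmetric] oeq using lhs rhs by linarith
  show "- m * (s * (1 - s / n0))^2 < 0" unfolding u_def[symmetric] using mpos uf by simp
  have "m * u \<le> (1 / n0) * n0" using m1 uf mpos n0 by (intro mult_mono) auto
  then have "m * u \<le> 1" using n0 by simp
  then have "m * u * u \<le> 1 * u" using uf by (intro mult_right_mono) auto
  then show "- (s * (1 - s / n0)) \<le> - m * (s * (1 - s / n0))^2"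
    unfolding u_def[symmetric] by (simp add: power2_eq_square mult.assoc)
qed

lemma L_sup:
  fixes n0 chi s :: real
  assumes n0: "n0 > 0" and chi: "chi \<ge> 0" and s: "0 < s" "s < n0"
  shows "odef (2 + n0^3 * (1 + chi * n0)) (\<lambda>s. Dtilde n0 s chi * gfun n0 s) s (- (s * (1 - s / n0)))
          \<le> - (1 - 2 * s / n0)"
proof -
  define u where "u = s * (1 - s / n0)"
  have uf: "0 < u" "u \<le> n0" "\<bar>1 - 2 * s / n0\<bar> \<le> 1" using u_facts[OF s] unfolding u_def by auto
  have oeq: "odef (2 + n0^3 * (1 + chi * n0)) (\<lambda>s. Dtilde n0 s chi * gfun n0 s) s (- u)
      = - (2 + n0^3 * (1 + chi * n0)) + n0^2 * u * (1 + chi * s)"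
    unfolding odef_def Gform u_def[symmetric] using uf by (simp add: field_simps power2_eq_square)
  have "1 + chi * s \<le> 1 + chi * n0" using chi s by (simp add: mult_left_mono)
  then have "u * (1 + chi * s) \<le> n0 * (1 + chi * n0)"
    using uf chi s by (intro mult_mono) auto
  then have "n0^2 * (u * (1 + chi * s)) \<le> n0^2 * (n0 * (1 + chi * n0))"
    by (intro mult_left_mono) auto
  then have "n0^2 * u * (1 + chi * s) \<le> n0^3 * (1 + chi * n0)"
    by (simp add: power2_eq_square power3_eq_cube mult.assoc)
  moreover have "- (1 - 2 * s / n0) \<ge> - 1" using uf by linarith
  ultimately show ?thesis unfolding u_def[symmetric] oeq by linarith
qed



lemma G_facts:
  fixes n0 chi :: real
  assumes n0: "n0 > 0" and chi: "chi \<ge> 0"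
  shows "continuous_on {0<..<n0} (\<lambda>s. Dtilde n0 s chi * gfun n0 s)"
    and "\<forall>s\<in>{0<..<n0}. 0 \<le> Dtilde n0 s 0 * gfun n0 s \<and> Dtilde n0 s 0 * gfun n0 s \<le> Dtilde n0 s chi * gfun n0 s"
    and "\<forall>s\<in>{0<..<n0}. 0 \<le> Dtilde n0 s chi * gfun n0 s"
proof -
  show "continuous_on {0<..<n0} (\<lambda>s. Dtilde n0 s chi * gfun n0 s)"
    unfolding Dtilde_def gfun_def using n0 by (intro continuous_intros) auto
  show "\<forall>s\<in>{0<..<n0}. 0 \<le> Dtilde n0 s 0 * gfun n0 s \<and> Dtilde n0 s 0 * gfun n0 s \<le> Dtilde n0 s chi * gfun n0 s"
  proof
    fix s assume s: "s \<in> {0<..<n0}"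
    have "0 \<le> n0^2 * (s * (1 - s / n0))^2" by simp
    moreover have "1 \<le> 1 + chi * s" using chi s by simp
    ultimately show "0 \<le> Dtilde n0 s 0 * gfun n0 s \<and> Dtilde n0 s 0 * gfun n0 s \<le> Dtilde n0 s chi * gfun n0 s"
      unfolding Gform using mult_left_mono[of 1 "1 + chi * s" "n0^2 * (s * (1 - s / n0))^2"] by simp
  qed
  show "\<forall>s\<in>{0<..<n0}. 0 \<le> Dtilde n0 s chi * gfun n0 s"
  proof
    fix s assume s: "s \<in> {0<..<n0}"
    have "0 \<le> 1 + chi * s" using chi s by simp
    then show "0 \<le> Dtilde n0 s chi * gfun n0 s" unfolding Gform by simp
  qed
qed

lemma to_A:
  assumes "c > 0"
    and "\<forall>s\<in>{0<..<n0}. W s < 0 \<and> (W has_real_derivative odef c (\<lambda>s. Dtilde n0 s chi * gfun n0 s) s (W s)) (at s)"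
    and "(W \<longlongrightarrow> 0) (at_right 0)" "(W \<longlongrightarrow> 0) (at_left n0)"
  shows "c \<in> A_set n0 chi"
  unfolding A_set_def is_nonpos_solution_def using assms unfolding odef_def
  by (auto intro!: exI[of _ W] less_imp_le)

lemma u_lims:
  fixes n0 :: real assumes "n0 > 0"
  shows "((\<lambda>s. - (s * (1 - s / n0))) \<longlongrightarrow> 0) (at_right 0)"
    and "((\<lambda>s. - (s * (1 - s / n0))) \<longlongrightarrow> 0) (at_left n0)"
    and "((\<lambda>s. - m * (s * (1 - s / n0))^2) \<longlongrightarrow> 0) (at_left n0)"
proof -
  have "((\<lambda>s. - (s * (1 - s / n0))) \<longlongrightarrow> - (0 * (1 - 0 / n0))) (at_right 0)"
    by (intro tendsto_intros) (use assms in auto)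
  then show "((\<lambda>s. - (s * (1 - s / n0))) \<longlongrightarrow> 0) (at_right 0)" by simp
  have "((\<lambda>s. - (s * (1 - s / n0))) \<longlongrightarrow> - (n0 * (1 - n0 / n0))) (at_left n0)"
    by (intro tendsto_intros) (use assms in auto)
  then show "((\<lambda>s. - (s * (1 - s / n0))) \<longlongrightarrow> 0) (at_left n0)" using assms by simp
  have "((\<lambda>s. - m * (s * (1 - s / n0))^2) \<longlongrightarrow> - m * (n0 * (1 - n0 / n0))^2) (at_left n0)"
    by (intro tendsto_intros) (use assms in auto)
  then show "((\<lambda>s. - m * (s * (1 - s / n0))^2) \<longlongrightarrow> 0) (at_left n0)" using assms by simp
qed

lemma A_nonempty:
  fixes n0 chi :: real
  assumes n0: "n0 > 0" and chi: "chi \<ge> 0"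
  shows "A_set n0 chi \<noteq> {}"
proof -
  define c where "c = 2 + n0^3 * (1 + chi * n0)"
  have c0: "c > 0" unfolding c_def using n0 chi by (simp add: add_pos_nonneg)
  define m where "m = min (1 / n0) (n0^2 / (2 + c))"
  define L where "L s = - (s * (1 - s / n0))" for s :: real
  define L' where "L' s = - (1 - 2 * s / n0)" for s :: real
  define U where "U s = - m * (s * (1 - s / n0))^2" for s :: real
  define U' where "U' s = - 2 * m * (s * (1 - s / n0)) * (1 - 2 * s / n0)" for s :: real
  note Gf = G_facts[OF n0 chi]
  obtain W where W: "\<forall>s\<in>{0<..<n0}. W s < 0 \<and> (W has_real_derivative odef c (\<lambda>s. Dtilde n0 s chi * gfun n0 s) s (W s)) (at s)"
    "(W \<longlongrightarrow> 0) (at_right 0)" "(W \<longlongrightarrow> 0) (at_left n0)"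
  proof (rule exE[OF outer_exist[OF n0 Gf(1) Gf(3), of L U L' c U']], goal_cases)
    case 1 show ?case
      using U_sub(3,4)[OF n0 c0 chi m_def] unfolding L_def U_def by auto
  next
    case 2 show ?case
    proof
      fix s :: real assume s: "s \<in> {0<..<n0}"
      have "((\<lambda>s. - (s * (1 - s / n0))) has_real_derivative - (1 - 2 * s / n0)) (at s)"
        using u_deriv[of n0 s] n0 by (auto intro!: derivative_eq_intros)
      moreover have "odef c (\<lambda>s. Dtilde n0 s chi * gfun n0 s) s (L s) \<le> L' s"
        using L_sup[OF n0 chi, of s] s unfolding c_def L_def L'_def by auto
      ultimately show "(L has_real_derivative L' s) (at s) \<and> odef c (\<lambda>s. Dtilde n0 s chi * gfun n0 s) s (L s) \<le> L' s"
        unfolding L_def L'_def by auto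
    qed
  next
    case 3 show ?case
      using U_sub(1,2)[OF n0 c0 chi m_def] unfolding U_def U'_def by auto
  next
    case 4 show ?case using u_lims(1)[OF n0] unfolding L_def .
  next
    case 5 show ?case using u_lims(2)[OF n0] unfolding L_def .
  next
    case (6 W) then show ?case using that by blast
  qed
  have "c \<in> A_set n0 chi" by (rule to_A[OF c0 W])
  then show ?thesis by auto
qed

lemma A_sub:
  fixes n0 chi :: real
  assumes n0: "n0 > 0" and chi: "chi \<ge> 0"
  shows "A_set n0 chi \<subseteq> A_set n0 0"
proof
  fix c assume "c \<in> A_set n0 chi"
  then obtain z where c0: "c > 0" and z: "is_nonpos_solution n0 chi c z"
    unfolding A_set_def by auto
  define G1 where "G1 s = Dtilde n0 s chi * gfun n0 s" for s
  define G0 where "G0 s = Dtilde n0 s 0 * gfun n0 s" for s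
  define m where "m = min (1 / n0) (n0^2 / (2 + c))"
  define L' where "L' s = odef c G1 s (z s)" for s
  define U where "U s = - m * (s * (1 - s / n0))^2" for s :: real
  define U' where "U' s = - 2 * m * (s * (1 - s / n0)) * (1 - 2 * s / n0)" for s :: real
  have zs: "\<forall>s\<in>{0<..<n0}. z s < 0 \<and> (z has_real_derivative odef c G1 s (z s)) (at s)"
    using z unfolding is_nonpos_solution_def odef_def G1_def by (auto simp: less_le)
  have zl: "(z \<longlongrightarrow> 0) (at_right 0)" "(z \<longlongrightarrow> 0) (at_left n0)"
    using z unfolding is_nonpos_solution_def by auto
  have GG: "\<forall>s\<in>{0<..<n0}. 0 \<le> G0 s \<and> G0 s \<le> G1 s"
    using G_facts(2)[OF n0 chi] unfolding G0_def G1_def by auto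
  have Us: "\<forall>s\<in>{0<..<n0}. U s < 0 \<and> (U has_real_derivative U' s) (at s) \<and> U' s \<le> odef c G0 s (U s)"
    using U_sub(1,2,3)[OF n0 c0 order_refl m_def] unfolding U_def U'_def G0_def by auto
  have Ul: "(U \<longlongrightarrow> 0) (at_left n0)" using u_lims(3)[OF n0] unfolding U_def .
  have zU: "\<forall>s\<in>{0<..<n0}. z s \<le> U s"
    by (rule barrier_below[OF n0 GG zs zl(2) Us Ul])
  have Gc: "continuous_on {0<..<n0} G0" using G_facts(1)[OF n0 order_refl] unfolding G0_def .
  have G0nn: "\<forall>s\<in>{0<..<n0}. 0 \<le> G0 s" using GG by auto
  obtain W where W: "\<forall>s\<in>{0<..<n0}. W s < 0 \<and> (W has_real_derivative odef c G0 s (W s)) (at s)"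
    "(W \<longlongrightarrow> 0) (at_right 0)" "(W \<longlongrightarrow> 0) (at_left n0)"
  proof (rule exE[OF outer_exist[OF n0 Gc G0nn, of z U L' c U']], goal_cases)
    case 1 show ?case using zU Us by auto
  next
    case 2 show ?case
    proof
      fix s :: real assume s: "s \<in> {0<..<n0}"
      have "odef c G0 s (z s) \<le> odef c G1 s (z s)"
      proof -
        have zn: "z s < 0" using zs s by auto
        have "G1 s / z s \<le> G0 s / z s" using GG s zn by (intro divide_right_mono_neg) auto
        then show ?thesis unfolding odef_def by simp
      qed
      then show "(z has_real_derivative L' s) (at s) \<and> odef c G0 s (z s) \<le> L' s"
        using zs s unfolding L'_def by auto
    qed
  next
    case 3 show ?case using Us by auto
  next
    case 4 show ?case using zl(1) .
  next
    case 5 show ?case using zl(2) .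
  next
    case (6 W) then show ?case using that by blast
  qed
  show "c \<in> A_set n0 0" by (rule to_A[OF c0 W(1)[unfolded G0_def] W(2) W(3)])
qed

theorem propositionA1:
  fixes n0 sigma0 chi0 :: real
  assumes "n0 > 0" and "sigma0 > 0" and "chi0 \<ge> 0"
  shows "cbar n0 sigma0 chi0 \<ge> cbar n0 sigma0 0 \<and> c_star n0 chi0 \<ge> c_star n0 0"
proof
  show "cbar n0 sigma0 chi0 \<ge> cbar n0 sigma0 0" by (rule cbar_mono[OF assms])
  have bdd: "bdd_below (A_set n0 0)" unfolding A_set_def by (auto intro: bdd_belowI[of _ 0])
  show "c_star n0 chi0 \<ge> c_star n0 0"
    unfolding c_star_def
    by (rule cInf_superset_mono[OF A_nonempty[OF assms(1,3)] bdd A_sub[OF assms(1,3)]])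
qed


end
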